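(* Consider two arbitrary matrices $\bar{\boldsymbol{\Phi}}, \boldsymbol{\Phi} \in \mathbb{R}^{s\times r}$ with $\Delta_{\boldsymbol{\Phi}} := \|\bar{\boldsymbol{\Phi}} - \boldsymbol{\Phi}\|_F$. Suppose there exists a partition $\Omega_{1:r}$ on $[s]$ such that for any $i,i' \in \Omega_k$, $\bar{\boldsymbol{\Phi}}(i,:) = \bar{\boldsymbol{\Phi}}(i',:)$. Assume $\operatorname{rank}(\bar{\boldsymbol{\Phi}}) = r$. Let $\mathbf{U} \in \mathbb{R}^{s\times r}$ denote the top-$r$ left singular vectors of $\boldsymbol{\Phi}$ with $\mathbf{U}^\top \mathbf{U} = \mathbf{I}_{r}$. Let $\{\hat{\Omega}_{1:r}, \hat{c}_{1:r}\}$ be a $(1+\epsilon)$ solution to the k-means problem on clustering the rows of $\mathbf{U}$. Then, when $\Delta_{\boldsymbol{\Phi}} \leq \frac{\sigma_r(\bar{\boldsymbol{\Phi}}) \sqrt{|\Omega_{(r)}| + |\Omega_{(1)}|}}{8 \sqrt{(2+\epsilon) |\Omega_{(1)}|}}$, we have $\textup{MR}(\hat{\Omega}_{1:r}) \leq \frac{64(2+\epsilon)}{\sigma_{r}(\bar{\boldsymbol{\Phi}})^2} \Delta_{\boldsymbol{\Phi}}^2$.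
   Context: A $(1+\epsilon)$ k-means solution is a partition with centers whose k-means objective $\sum_k\sum_{i\in\hat{\Omega}_k}\|\mathbf{U}(i,:)-\hat{c}_k\|^2$ is at most $(1+\epsilon)$ times the optimal value. The misclustering rate is $\textup{MR}(\hat{\Omega}_{1:r})=\min_h\sum_{k\in[r]}|\{i:i\in\Omega_k,i\notin\hat{\Omega}_{h(k)}\}|/|\Omega_k|$, minimized over bijections $h:[r]\to[r]$; $\Omega_{(i)}$ denotes the cluster of $i$-th largest cardinality; $\sigma_r(\cdot)$ is the $r$-th largest singular value. *)

theory Defs
  imports "HOL-Analysis.Analysis"
begin

text \<open>Matrices in R^(s x r) are modelled as real^'r^'s (rows indexed by the finite
type 's, columns by the finite type 'r); so s = CARD('s), r = CARD('r).
The i-th row of A is A $ i.\<close>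

definition frob_norm :: "real^'r^'s \<Rightarrow> real" where
  "frob_norm A = sqrt (\<Sum>i\<in>UNIV. \<Sum>j\<in>UNIV. (A $ i $ j)^2)"

text \<open>Eigenvalues of a square real matrix.\<close>
definition eigenvalues :: "real^'n^'n \<Rightarrow> real set" where
  "eigenvalues M = {mu. \<exists>x. x \<noteq> 0 \<and> M *v x = mu *s x}"

text \<open>sigma_r(A) for A in R^(s x r), s \<ge> r: the r-th largest (i.e. smallest) singular
value, the square root of the smallest eigenvalue of A^T A.\<close>
definition sigma_r :: "real^'r^'s \<Rightarrow> real" where
  "sigma_r A = sqrt (Min (eigenvalues (transpose A ** A)))"

text \<open>A partition of the row index set into r (nonempty) blocks indexed by 'r.\<close>
definition is_partition :: "('r \<Rightarrow> 's set) \<Rightarrow> bool" where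
  "is_partition \<Omega> \<longleftrightarrow> (\<forall>k. \<Omega> k \<noteq> {}) \<and> (\<forall>k k'. k \<noteq> k' \<longrightarrow> \<Omega> k \<inter> \<Omega> k' = {})
      \<and> (\<Union>k. \<Omega> k) = UNIV"

text \<open>U consists of top-r left singular vectors of Phi (thin SVD Phi = U Sigma V^T).\<close>
definition top_left_singular_vectors :: "real^'r^'s \<Rightarrow> real^'r^'s \<Rightarrow> bool" where
  "top_left_singular_vectors U \<Phi> \<longleftrightarrow> transpose U ** U = mat 1 \<and>
     (\<exists>(S::real^'r^'r) (V::real^'r^'r). (\<forall>i j. i \<noteq> j \<longrightarrow> S $ i $ j = 0) \<and> (\<forall>i. S $ i $ i \<ge> 0)
        \<and> orthogonal_matrix V \<and> \<Phi> = U ** S ** transpose V)"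

definition kmeans_obj :: "real^'r^'s \<Rightarrow> ('r \<Rightarrow> 's set) \<Rightarrow> ('r \<Rightarrow> real^'r) \<Rightarrow> real" where
  "kmeans_obj U \<Omega> c = (\<Sum>k\<in>UNIV. \<Sum>i\<in>\<Omega> k. (norm (U $ i - c k))^2)"

definition kmeans_opt :: "real^'r^'s \<Rightarrow> real" where
  "kmeans_opt U = Inf {kmeans_obj U \<Omega> c | \<Omega> c. is_partition \<Omega>}"

definition approx_kmeans_solution ::
  "real \<Rightarrow> real^'r^'s \<Rightarrow> ('r \<Rightarrow> 's set) \<Rightarrow> ('r \<Rightarrow> real^'r) \<Rightarrow> bool" where
  "approx_kmeans_solution \<epsilon> U \<Omega> c \<longleftrightarrow> is_partition \<Omega> \<and> kmeans_obj U \<Omega> c \<le> (1 + \<epsilon>) * kmeans_opt U"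

definition misclustering_rate :: "('r::finite \<Rightarrow> 's set) \<Rightarrow> ('r \<Rightarrow> 's set) \<Rightarrow> real" where
  "misclustering_rate \<Omega> \<Omega>h = Min {(\<Sum>k\<in>UNIV. real (card {i. i \<in> \<Omega> k \<and> i \<notin> \<Omega>h (h k)}) / real (card (\<Omega> k)))
      | h. bij h}"

definition max_cluster_size :: "('r \<Rightarrow> 's set) \<Rightarrow> nat" where
  "max_cluster_size \<Omega> = Max (range (\<lambda>k. card (\<Omega> k)))"

definition min_cluster_size :: "('r \<Rightarrow> 's set) \<Rightarrow> nat" where
  "min_cluster_size \<Omega> = Min (range (\<lambda>k. card (\<Omega> k)))"

end

theory Submission
  imports Defs
begin




lemma inner_mv: "inner (A *v x) (y::real^'m) = inner x (transpose A *v y)"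
  for A :: "real^'n^'m"
  by (metis dot_lmul_matrix inner_commute transpose_matrix_vector)

lemma norm_sq_vec: "(norm (x::real^'n))^2 = (\<Sum>j\<in>UNIV. (x$j)^2)"
  unfolding power2_norm_eq_inner by (simp add: inner_vec_def power2_eq_square)

definition fr2 :: "real^'r^'s \<Rightarrow> real" where
  "fr2 A = (\<Sum>i\<in>UNIV. (norm (A$i))^2)"

lemma fr2_nonneg: "fr2 A \<ge> 0"
  unfolding fr2_def by (simp add: sum_nonneg)

lemma frob_fr2: "frob_norm A = sqrt (fr2 A)"
  unfolding frob_norm_def fr2_def by (simp add: norm_sq_vec)

lemma frob_sq: "(frob_norm A)^2 = fr2 A"
  by (simp add: frob_fr2 fr2_nonneg)

lemma frob_nonneg: "frob_norm A \<ge> 0"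
  by (simp add: frob_fr2 fr2_nonneg)

lemma rowCS: "norm (E *v x) \<le> frob_norm E * norm x"
proof -
  have "(norm (E *v x))^2 = (\<Sum>i\<in>UNIV. (inner (E$i) x)^2)"
    by (simp add: norm_sq_vec matrix_vector_mul_component)
  also have "\<dots> \<le> (\<Sum>i\<in>UNIV. (norm (E$i))^2 * (norm x)^2)"
  proof (rule sum_mono)
    fix i
    have "\<bar>inner (E$i) x\<bar> \<le> norm (E$i) * norm x" by (rule Cauchy_Schwarz_ineq2)
    then have "\<bar>inner (E$i) x\<bar>^2 \<le> (norm (E$i) * norm x)^2"
      by (rule power_mono) simp
    then show "(inner (E$i) x)^2 \<le> (norm (E$i))^2 * (norm x)^2"
      by (simp add: power_mult_distrib)
  qed
  also have "\<dots> = fr2 E * (norm x)^2"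
    unfolding fr2_def by (rule sum_distrib_right[symmetric])
  also have "\<dots> = (frob_norm E * norm x)^2"
    by (simp only: power_mult_distrib frob_sq)
  finally show ?thesis
    by (rule power2_le_imp_le) (simp add: frob_nonneg)
qed

lemma iso: fixes U :: "real^'n^'m" assumes "transpose U ** U = mat 1" shows "norm (U *v a) = norm a"
proof -
  have "inner (U *v a) (U *v a) = inner a a"
    by (subst inner_mv) (simp add: matrix_vector_mul_assoc assms)
  then show ?thesis by (simp add: norm_eq_sqrt_inner)
qed

lemma proj_parts:
  fixes U :: "real^'n^'m"
  assumes UU: "transpose U ** U = mat 1"
  shows "(norm y)^2 = (norm (transpose U *v y))^2 + (norm (y - U *v (transpose U *v y)))^2"
proof -
  let ?a = "transpose U *v y"
  let ?p = "U *v ?a"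
  have 1: "inner ?p y = inner ?a ?a" by (rule inner_mv)
  have 2: "inner ?p ?p = inner ?a ?a"
    by (subst inner_mv) (simp add: matrix_vector_mul_assoc UU)
  have "inner ?p (y - ?p) = 0"
    by (simp only: inner_diff_right 1 2 diff_self)
  then have "orthogonal ?p (y - ?p)" unfolding orthogonal_def .
  from norm_add_Pythagorean[OF this] have "(norm y)^2 = (norm ?p)^2 + (norm (y - ?p))^2"
    by simp
  then show ?thesis by (simp add: iso[OF UU])
qed

lemma proj1: fixes U :: "real^'n^'m" assumes "transpose U ** U = mat 1" shows "norm (transpose U *v y) \<le> norm y"
  using proj_parts[OF assms, of y] by (metis le_add_same_cancel1 norm_ge_zero power2_le_imp_le zero_le_power2)

lemma proj2: fixes U :: "real^'n^'m" assumes "transpose U ** U = mat 1" shows "norm (y - U *v (transpose U *v y)) \<le> norm y"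
  using proj_parts[OF assms, of y] by (metis le_add_same_cancel2 norm_ge_zero power2_le_imp_le zero_le_power2)

lemma vm_bound:
  fixes D :: "real^'n^'m"
  assumes "\<And>z. norm (D *v z) \<le> L * norm z" and L0: "L \<ge> 0"
  shows "norm (x v* D) \<le> L * norm (x::real^'m)"
proof -
  let ?w = "x v* D"
  have "(norm ?w)^2 = inner x (D *v ?w)"
    by (simp add: power2_norm_eq_inner dot_lmul_matrix)
  also have "\<dots> \<le> norm x * norm (D *v ?w)" by (rule Cauchy_Schwarz_ineq2[THEN abs_le_D1])
  also have "\<dots> \<le> norm x * (L * norm ?w)" by (simp add: assms mult_left_mono)
  finally have h: "(norm ?w)^2 \<le> (L * norm x) * norm ?w" by (simp add: algebra_simps)
  show ?thesis
  proof (cases "norm ?w = 0")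
    case True
    have "0 \<le> L * norm x" using L0 by simp
    then show ?thesis using True by simp
  next
    case False
    then have "norm ?w > 0" by simp
    then show ?thesis using h by (simp add: power2_eq_square)
  qed
qed

lemma row_mul: "(F ** D) $ i = (F $ i) v* D"
  by (simp add: matrix_matrix_mult_def vector_matrix_mult_def vec_eq_iff)

lemma fr2_mul:
  fixes D :: "real^'n^'m"
  assumes "\<And>z. norm (D *v z) \<le> L * norm z" "L \<ge> 0"
  shows "fr2 (F ** D) \<le> L^2 * fr2 F"
  unfolding fr2_def sum_distrib_left
proof (rule sum_mono)
  fix i
  have "norm ((F ** D)$i) \<le> L * norm (F$i)" unfolding row_mul by (rule vm_bound[OF assms(1) assms(2)])
  then have "(norm ((F ** D)$i))^2 \<le> (L * norm (F$i))^2" by (rule power_mono) simp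
  then show "(norm ((F ** D)$i))^2 \<le> L^2 * (norm (F$i))^2" by (simp add: power_mult_distrib)
qed

lemma fr2_cols: "fr2 A = (\<Sum>j\<in>UNIV. (norm (A *v axis j 1))^2)"
proof -
  have c: "(A *v axis j 1) $ i = A $ i $ j" for i j
    by (simp add: matrix_vector_mult_def axis_def if_distrib if_distribR sum.delta cong: if_cong)
  show ?thesis unfolding fr2_def norm_sq_vec c by (rule sum.swap)
qed

lemma fr2_proj:
  fixes U :: "real^'n^'m"
  assumes UU: "transpose U ** U = mat 1"
  shows "fr2 (E - U ** (transpose U ** E)) \<le> fr2 E"
  unfolding fr2_cols[of "E - _"] fr2_cols[of E]
proof (rule sum_mono)
  fix j
  let ?y = "E *v axis j 1"
  have "(E - U ** (transpose U ** E)) *v axis j 1 = ?y - U *v (transpose U *v ?y)"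
    by (simp add: matrix_vector_mult_diff_rdistrib matrix_vector_mul_assoc)
  then show "(norm ((E - U ** (transpose U ** E)) *v axis j 1))^2 \<le> (norm ?y)^2"
    using proj2[OF UU, of ?y] by (simp add: power_mono)
qed



lemma quad_zero:
  fixes a b :: real
  assumes "\<And>t. 0 \<le> 2*t*a + t^2*b"
  shows "a = 0"
proof (rule ccontr)
  assume a: "a \<noteq> 0"
  define t where "t = - a / (\<bar>b\<bar> + 1)"
  have pos: "\<bar>b\<bar> + 1 > 0" by simp
  have "2*t*a + t^2*b \<le> 2*t*a + t^2*\<bar>b\<bar>" by (simp add: mult_left_mono)
  also have "\<dots> = (a^2/(\<bar>b\<bar>+1)) * (-2 + \<bar>b\<bar>/(\<bar>b\<bar>+1))"
    unfolding t_def power2_eq_square using pos by (simp add: divide_simps) (simp add: algebra_simps)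
  also have "\<dots> < 0"
  proof -
    have h1: "\<bar>b\<bar>/(\<bar>b\<bar>+1) < 2" using pos by (simp add: divide_less_eq)
    have h2: "a^2/(\<bar>b\<bar>+1) > 0" using a pos by simp
    have h3: "-2 + \<bar>b\<bar>/(\<bar>b\<bar>+1) < 0" using h1 by linarith
    show ?thesis using h2 h3 by (rule mult_pos_neg)
  qed
  finally show False using assms[of t] by simp
qed
lemma gram_sym: "inner ((transpose A ** A) *v x) y = inner (A *v x) (A *v (y::real^'n))"
  for A :: "real^'n^'m"
  by (metis inner_mv matrix_vector_mul_assoc inner_commute)

lemma fin_eig: "finite (eigenvalues (transpose A ** A))" for A :: "real^'n^'m"
  proof -
    define G where "G = transpose A ** A"
    define v where "v lam = (SOME x. x \<noteq> 0 \<and> G *v x = lam *s x)" for lam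
    have v: "v lam \<noteq> 0 \<and> G *v v lam = lam *s v lam" if "lam \<in> eigenvalues G" for lam
      using that unfolding eigenvalues_def v_def mem_Collect_eq by (rule someI_ex) 
    have orth: "inner (v lam) (v lam') = 0" if "lam \<in> eigenvalues G" "lam' \<in> eigenvalues G" "lam \<noteq> lam'" for lam lam'
    proof -
      have "lam * inner (v lam) (v lam') = inner (G *v v lam) (v lam')"
        using v[OF that(1)] by (simp add: scalar_mult_eq_scaleR)
      also have "\<dots> = inner (v lam) (G *v v lam')"
        unfolding G_def by (metis gram_sym inner_commute)
      also have "\<dots> = lam' * inner (v lam) (v lam')"
        using v[OF that(2)] by (simp add: scalar_mult_eq_scaleR)
      finally show ?thesis using that(3) by simp
    qed
    have injv: "inj_on v (eigenvalues G)"
    proof (rule inj_onI)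
      fix lam lam' assume a: "lam \<in> eigenvalues G" "lam' \<in> eigenvalues G" "v lam = v lam'"
      show "lam = lam'"
      proof (rule ccontr)
        assume "lam \<noteq> lam'"
        then have "inner (v lam) (v lam) = 0" using orth[OF a(1,2)] a(3) by simp
        then show False using v[OF a(1)] by simp
      qed
    qed
    have "independent (v ` eigenvalues G)"
      apply (rule pairwise_orthogonal_independent)
      using orth v unfolding pairwise_def orthogonal_def by fastforce+
    then have "finite (v ` eigenvalues G)" using independent_bound by blast
    then show ?thesis using finite_imageD injv unfolding G_def by blast
  qed

lemma eigen_main:
  fixes A :: "real^'n^'m"
  assumes inj: "inj ((*v) A)"
  shows "Min (eigenvalues (transpose A ** A)) > 0 \<and>
    (\<forall>x. Min (eigenvalues (transpose A ** A)) * (norm x)^2 \<le> (norm (A *v x))^2)"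
proof -
  define G where "G = transpose A ** A"
  define f where "f x = (norm (A *v x))^2" for x
  have cf: "continuous_on (sphere (0::real^'n) 1) f"
    unfolding f_def by (intro continuous_intros)
  have "sphere (0::real^'n) 1 \<noteq> {}" by simp
  then obtain x0 where x0: "x0 \<in> sphere 0 1" and x0min: "\<And>y. y \<in> sphere 0 1 \<Longrightarrow> f x0 \<le> f y"
    using continuous_attains_inf[OF compact_sphere _ cf] by blast
  define \<mu> where "\<mu> = f x0"
  have nx0: "norm x0 = 1" using x0 by simp
  have lb: "\<mu> * (norm y)^2 \<le> f y" for y
  proof (cases "y = 0")
    case True then show ?thesis by (simp add: f_def)
  next
    case False
    let ?z = "(1/norm y) *\<^sub>R y"
    have "?z \<in> sphere 0 1" using False by simp
    then have "\<mu> \<le> f ?z" using x0min \<mu>_def by blast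
    also have "f ?z = f y / (norm y)^2"
      by (simp add: f_def matrix_vector_mult_scaleR power_divide)
    finally show ?thesis using False by (simp add: pos_le_divide_eq)
  qed
  have eig: "G *v x0 = \<mu> *s x0"
  proof -
    have zero: "inner (G *v x0 - \<mu> *\<^sub>R x0) y = 0" for y
    proof -
      let ?a = "inner (G *v x0 - \<mu> *\<^sub>R x0) y"
      let ?b = "f y - \<mu> * (norm y)^2"
      have "0 \<le> 2*t*?a + t^2*?b" for t
      proof -
        have "\<mu> * (norm (x0 + t *\<^sub>R y))^2 \<le> f (x0 + t *\<^sub>R y)" by (rule lb)
        moreover have "(norm (x0 + t *\<^sub>R y))^2 = 1 + 2*t*inner x0 y + t^2 * (norm y)^2"
          using nx0 unfolding power2_norm_eq_inner by (simp add: inner_add_left norm_eq_sqrt_inner inner_add_right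
              inner_commute power2_eq_square algebra_simps)
        moreover have "f (x0 + t *\<^sub>R y) = \<mu> + 2*t*inner (A *v x0) (A *v y) + t^2 * f y"
          unfolding f_def \<mu>_def power2_norm_eq_inner
          by (simp add: matrix_vector_right_distrib matrix_vector_mult_scaleR
              inner_add_left inner_add_right inner_commute power2_eq_square algebra_simps)
        moreover have "inner (A *v x0) (A *v y) = inner (G *v x0) y"
          unfolding G_def by (simp add: gram_sym)
        ultimately show ?thesis
          by (simp add: inner_diff_left algebra_simps)
      qed
      then show ?thesis by (rule quad_zero)
    qed
    have "G *v x0 - \<mu> *\<^sub>R x0 = 0" using zero[of "G *v x0 - \<mu> *\<^sub>R x0"] by simp
    then show ?thesis by (simp add: scalar_mult_eq_scaleR)
  qed
  have muin: "\<mu> \<in> eigenvalues G"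
  proof -
    have "x0 \<noteq> 0" using nx0 by auto
    with eig show ?thesis unfolding eigenvalues_def mem_Collect_eq by (intro exI[of _ x0] conjI)
  qed
  have ev_ge: "lam \<ge> \<mu>" if "lam \<in> eigenvalues G" for lam
  proof -
    from that have "\<exists>x. x \<noteq> 0 \<and> G *v x = lam *s x" unfolding eigenvalues_def by simp
    then obtain x where x: "x \<noteq> 0" "G *v x = lam *s x" by blast
    have "inner (G *v x) x = inner (lam *\<^sub>R x) x"
      using x(2) by (simp add: scalar_mult_eq_scaleR)
    also have "\<dots> = lam * (norm x)^2"
      by (simp only: inner_scaleR_left power2_norm_eq_inner)
    finally have 1: "inner (G *v x) x = lam * (norm x)^2" .
    have 2: "inner (G *v x) x = f x" unfolding G_def f_def gram_sym power2_norm_eq_inner ..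
    have "\<mu> * (norm x)^2 \<le> lam * (norm x)^2" using lb[of x] 1 2 by simp
    moreover have "(norm x)^2 > 0" using x(1) by simp
    ultimately show ?thesis by simp
  qed
  have fin: "finite (eigenvalues G)" unfolding G_def by (rule fin_eig)
  have minEq: "Min (eigenvalues G) = \<mu>"
  proof (rule antisym)
    show "Min (eigenvalues G) \<le> \<mu>" using fin muin by (rule Min_le)
    have "Min (eigenvalues G) \<in> eigenvalues G" using fin muin by (intro Min_in) auto
    then show "\<mu> \<le> Min (eigenvalues G)" by (rule ev_ge)
  qed
  have "\<mu> > 0"
  proof -
    have "x0 \<noteq> 0" using nx0 by auto
    then have "A *v x0 \<noteq> A *v 0" using inj unfolding inj_def by blast
    then have "A *v x0 \<noteq> 0" by simp
    then show ?thesis unfolding \<mu>_def f_def by simp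
  qed
  then show ?thesis using minEq lb unfolding G_def f_def by simp
qed



lemma mdiff_r: "(A - B) ** D = A ** D - B ** (D::real^'p^'n)" for A B :: "real^'n^'m"
  by (simp add: matrix_matrix_mult_def vec_eq_iff sum_subtractf algebra_simps)

lemma mdiff_l: "A ** (B - C) = A ** B - A ** (C::real^'p^'n)" for A :: "real^'n^'m"
  by (simp add: matrix_matrix_mult_def vec_eq_iff sum_subtractf algebra_simps)

lemma madd_r: "(A + B) ** D = A ** D + B ** (D::real^'p^'n)" for A B :: "real^'n^'m"
  by (simp add: matrix_matrix_mult_def vec_eq_iff sum.distrib algebra_simps)

lemma fr2_uminus: "fr2 (- A) = fr2 A"
  unfolding fr2_def by simp

lemma part_unique:
  assumes "is_partition \<Omega>"
  shows "\<exists>!k. i \<in> \<Omega> k"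
  using assms unfolding is_partition_def by blast

definition lab :: "('r \<Rightarrow> 's set) \<Rightarrow> 's \<Rightarrow> 'r" where
  "lab \<Omega> i = (THE k. i \<in> \<Omega> k)"

lemma lab_in: "is_partition \<Omega> \<Longrightarrow> i \<in> \<Omega> (lab \<Omega> i)"
  unfolding lab_def by (rule theI') (rule part_unique)

lemma lab_eq: "is_partition \<Omega> \<Longrightarrow> i \<in> \<Omega> k \<Longrightarrow> lab \<Omega> i = k"
  unfolding lab_def by (metis part_unique the_equality)

lemma part_sum:
  fixes \<Omega> :: "'r::finite \<Rightarrow> 's::finite set"
  assumes "is_partition \<Omega>"
  shows "(\<Sum>k\<in>UNIV. \<Sum>i\<in>\<Omega> k. f i) = (\<Sum>i\<in>UNIV. f i)"
proof -
  have "(\<Union>(\<Omega> ` UNIV)) = UNIV" using assms unfolding is_partition_def by simp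
  moreover have "sum f (\<Union>(\<Omega> ` UNIV)) = (\<Sum>k\<in>UNIV. sum f (\<Omega> k))"
    by (rule sum.UNION_disjoint) (use assms in \<open>auto simp: is_partition_def\<close>)
  ultimately show ?thesis by simp
qed

lemma sum_ind: "(\<Sum>i\<in>UNIV. (if i \<in> A then c else 0)) = real (card A) * (c::real)"
  for A :: "'s::finite set"
  by (simp add: sum.If_cases)


theorem lemma7:
  fixes \<Phi>bar \<Phi> U :: "real^'r::finite^'s::finite"
    and \<Omega> \<Omega>h :: "'r \<Rightarrow> 's set" and ch :: "'r \<Rightarrow> real^'r" and \<epsilon> :: real
  assumes "\<epsilon> \<ge> 0"
    and "is_partition \<Omega>"
    and "\<And>k i i'. i \<in> \<Omega> k \<Longrightarrow> i' \<in> \<Omega> k \<Longrightarrow> \<Phi>bar $ i = \<Phi>bar $ i'"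
    and "rank \<Phi>bar = CARD('r)"
    and "top_left_singular_vectors U \<Phi>"
    and "approx_kmeans_solution \<epsilon> U \<Omega>h ch"
    and "frob_norm (\<Phi>bar - \<Phi>) \<le> sigma_r \<Phi>bar * sqrt (real (min_cluster_size \<Omega> + max_cluster_size \<Omega>))
           / (8 * sqrt ((2 + \<epsilon>) * real (max_cluster_size \<Omega>)))"
  shows "misclustering_rate \<Omega> \<Omega>h \<le> 64 * (2 + \<epsilon>) / (sigma_r \<Phi>bar)^2 * (frob_norm (\<Phi>bar - \<Phi>))^2"
proof -
  note eps = assms(1) and part = assms(2) and const = assms(3)
  have UU: "transpose U ** U = mat 1" and "\<exists>(S::real^'r^'r) (V::real^'r^'r). \<Phi> = U ** S ** transpose V"
    using assms(5) unfolding top_left_singular_vectors_def by blast+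
  then obtain S V :: "real^'r^'r" where PhiSV: "\<Phi> = U ** S ** transpose V" by blast
  have partH: "is_partition \<Omega>h" and objH: "kmeans_obj U \<Omega>h ch \<le> (1 + \<epsilon>) * kmeans_opt U"
    using assms(6) unfolding approx_kmeans_solution_def by blast+
  have PhiU: "U ** (transpose U ** \<Phi>) = \<Phi>"
    unfolding PhiSV by (simp add: matrix_mul_assoc UU)
  have injB: "inj ((*v) \<Phi>bar)" using assms(4) full_rank_injective by blast
  define \<sigma> where "\<sigma> = sigma_r \<Phi>bar"
  define \<mu> where "\<mu> = Min (eigenvalues (transpose \<Phi>bar ** \<Phi>bar))"
  have mu: "\<mu> > 0" "\<And>x. \<mu> * (norm x)^2 \<le> (norm (\<Phi>bar *v x))^2"
    using eigen_main[OF injB] unfolding \<mu>_def by auto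
  have sig_mu: "\<sigma> = sqrt \<mu>" unfolding \<sigma>_def \<mu>_def sigma_r_def ..
  have sigpos: "\<sigma> > 0" using mu(1) sig_mu by simp
  have sigx: "\<sigma> * norm x \<le> norm (\<Phi>bar *v x)" for x
  proof -
    have "(\<sigma> * norm x)^2 \<le> (norm (\<Phi>bar *v x))^2"
      using mu(1) mu(2)[of x] by (simp add: sig_mu power_mult_distrib)
    then show ?thesis by (rule power2_le_imp_le) simp
  qed
  define E where "E = \<Phi>bar - \<Phi>"
  define \<Delta> where "\<Delta> = frob_norm E"
  have Dnn: "\<Delta> \<ge> 0" unfolding \<Delta>_def by (rule frob_nonneg)
  define n where "n k = card (\<Omega> k)" for k
  define N where "N = max_cluster_size \<Omega>"
  define nm where "nm = min_cluster_size \<Omega>"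
  have n_pos: "n k \<ge> 1" for k
    using part unfolding n_def is_partition_def by (simp add: Suc_le_eq card_gt_0_iff)
  have n_le: "n k \<le> N" for k
    unfolding N_def max_cluster_size_def n_def by (rule Max_ge) auto
  have n_ge: "nm \<le> n k" for k
    unfolding nm_def min_cluster_size_def n_def by (rule Min_le) auto
  have hyp: "\<Delta> \<le> \<sigma> * sqrt (real (nm + N)) / (8 * sqrt ((2 + \<epsilon>) * real N))"
    using assms(7) unfolding \<Delta>_def E_def \<sigma>_def nm_def N_def .
  have Npos: "real N \<ge> 1" using n_pos[of undefined] n_le[of undefined] by simp
  have nmN: "real nm \<le> real N" using n_ge[of undefined] n_le[of undefined] by simp
  have hyp2: "\<Delta>^2 \<le> \<sigma>^2 * (real nm + real N) / (64 * ((2 + \<epsilon>) * real N))"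
  proof -
    have "\<Delta>^2 \<le> (\<sigma> * sqrt (real (nm + N)) / (8 * sqrt ((2 + \<epsilon>) * real N)))^2"
      using hyp Dnn by (rule power_mono)
    also have "\<dots> = \<sigma>^2 * (real nm + real N) / (64 * ((2 + \<epsilon>) * real N))"
      using eps Npos by (simp add: power_divide power_mult_distrib)
    finally show ?thesis .
  qed
  have ratio: "(real nm + real N) / ((2 + \<epsilon>) * real N) \<le> 1"
  proof -
    have "\<epsilon> * real N \<ge> 0" using eps Npos by simp
    then have "real nm + real N \<le> (2 + \<epsilon>) * real N" using nmN by (simp add: algebra_simps)
    moreover have "(2 + \<epsilon>) * real N > 0" using eps Npos by simp
    ultimately show ?thesis by (simp add: divide_le_eq)
  qed
  have hyp3: "\<Delta>^2 \<le> (\<sigma>/8)^2"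
  proof -
    have "\<sigma>^2 * (real nm + real N) / (64 * ((2 + \<epsilon>) * real N))
        = (\<sigma>/8)^2 * ((real nm + real N) / ((2 + \<epsilon>) * real N))"
      by (simp add: power_divide)
    also have "\<dots> \<le> (\<sigma>/8)^2 * 1" using ratio by (intro mult_left_mono) simp_all
    finally show ?thesis using hyp2 by simp
  qed
  have D8: "\<Delta> \<le> \<sigma> / 8"
  proof -
    have "0 \<le> \<sigma>/8" using sigpos by simp
    from power2_le_imp_le[OF hyp3 this] show ?thesis .
  qed
  define \<kappa> where "\<kappa> = \<sigma> - \<Delta>"
  have kap: "\<kappa> \<ge> 7/8 * \<sigma>" "\<kappa> > 0" unfolding \<kappa>_def using D8 sigpos by simp_all
  define F where "F = E - U ** (transpose U ** E)"
  define C where "C = transpose U ** \<Phi>bar"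
  have UC: "U ** C = \<Phi>bar - F"
  proof -
    have "U ** C = U ** (transpose U ** (\<Phi> + E))" unfolding C_def E_def by simp
    also have "\<dots> = U ** (transpose U ** \<Phi>) + U ** (transpose U ** E)"
      by (simp add: matrix_add_ldistrib)
    also have "\<dots> = \<Phi>bar - F" unfolding PhiU F_def E_def by simp
    finally show ?thesis .
  qed
  have Fx: "norm (F *v x) \<le> \<Delta> * norm x" for x
  proof -
    have "F *v x = E *v x - U *v (transpose U *v (E *v x))"
      unfolding F_def by (simp add: matrix_vector_mult_diff_rdistrib matrix_vector_mul_assoc)
    then have "norm (F *v x) \<le> norm (E *v x)" using proj2[OF UU] by simp
    also have "\<dots> \<le> \<Delta> * norm x" unfolding \<Delta>_def by (rule rowCS)
    finally show ?thesis .
  qed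
  have Cx: "\<kappa> * norm x \<le> norm (C *v x)" for x
  proof -
    have "norm (C *v x) = norm (U *v (C *v x))" using iso[OF UU] by simp
    also have "U *v (C *v x) = \<Phi>bar *v x - F *v x"
      by (simp add: matrix_vector_mul_assoc UC matrix_vector_mult_diff_rdistrib)
    finally have "norm (C *v x) = norm (\<Phi>bar *v x - F *v x)" .
    moreover have "norm (\<Phi>bar *v x) - norm (F *v x) \<le> norm (\<Phi>bar *v x - F *v x)"
      by (rule norm_triangle_ineq2)
    ultimately show ?thesis using sigx[of x] Fx[of x] unfolding \<kappa>_def by (simp add: algebra_simps)
  qed
  have "inj ((*v) C)"
  proof (rule injI)
    fix x y assume "C *v x = C *v y"
    then have "C *v (x - y) = 0" by (simp add: matrix_vector_mult_diff_distrib)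
    then have "\<kappa> * norm (x - y) \<le> 0" using Cx[of "x - y"] by simp
    then show "x = y" using kap(2) by (simp add: mult_le_0_iff)
  qed
  then obtain D where DC: "D ** C = mat 1" using matrix_left_invertible_injective by blast
  have CD: "C ** D = mat 1" using DC matrix_left_right_inverse by blast
  have Dz: "norm (D *v z) \<le> (1/\<kappa>) * norm z" for z
  proof -
    have "C *v (D *v z) = z" by (simp add: matrix_vector_mul_assoc CD)
    then have "\<kappa> * norm (D *v z) \<le> norm z" using Cx[of "D *v z"] by simp
    then show ?thesis using kap(2) by (simp add: field_simps)
  qed
  define M where "M = \<Phi>bar ** D"
  have UM: "U = M - F ** D"
  proof -
    have "U = U ** (C ** D)" by (simp add: CD)
    also have "\<dots> = (\<Phi>bar - F) ** D" by (simp add: matrix_mul_assoc UC)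
    finally show ?thesis unfolding M_def by (simp add: mdiff_r)
  qed
  define cost where "cost = fr2 (U - M)"
  have cost_bd: "cost \<le> \<Delta>^2 / \<kappa>^2"
  proof -
    have "cost = fr2 (F ** D)" unfolding cost_def UM by (simp add: fr2_uminus[of "F ** D", symmetric])
    also have "\<dots> \<le> (1/\<kappa>)^2 * fr2 F" by (rule fr2_mul) (use Dz kap in auto)
    also have "\<dots> \<le> (1/\<kappa>)^2 * fr2 E" unfolding F_def by (intro mult_left_mono fr2_proj[OF UU]) simp
    also have "fr2 E = \<Delta>^2" unfolding \<Delta>_def by (simp add: frob_sq)
    finally show ?thesis by (simp add: power_divide)
  qed
  have cost_nn: "cost \<ge> 0" unfolding cost_def by (rule fr2_nonneg)
  have UtM: "transpose U ** M = mat 1"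
    unfolding M_def by (simp add: matrix_mul_assoc C_def[symmetric] CD)
  have MC: "M ** C = \<Phi>bar" unfolding M_def by (simp add: matrix_mul_assoc[symmetric] DC)
  define labh where "labh = lab \<Omega>h"
  define m where "m k = M $ (SOME i. i \<in> \<Omega> k)" for k
  have Mrow: "M $ i = m k" if "i \<in> \<Omega> k" for i k
  proof -
    have ne: "\<Omega> k \<noteq> {}" using part unfolding is_partition_def by blast
    then have "(SOME i. i \<in> \<Omega> k) \<in> \<Omega> k" by (simp add: some_in_eq)
    then have "\<Phi>bar $ i = \<Phi>bar $ (SOME i. i \<in> \<Omega> k)" using const that by blast
    then show ?thesis unfolding m_def M_def row_mul by simp
  qed
  have obj_nn: "kmeans_obj U \<Omega>' c \<ge> 0" for \<Omega>' c
    unfolding kmeans_obj_def by (intro sum_nonneg) simp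
  have opt_le: "kmeans_opt U \<le> cost"
  proof -
    have "kmeans_obj U \<Omega> m = (\<Sum>k\<in>UNIV. \<Sum>i\<in>\<Omega> k. (norm ((U - M) $ i))^2)"
      unfolding kmeans_obj_def by (intro sum.cong refl) (simp add: Mrow)
    also have "\<dots> = cost" unfolding cost_def fr2_def by (rule part_sum[OF part])
    finally have 1: "kmeans_obj U \<Omega> m = cost" .
    have "kmeans_opt U \<le> kmeans_obj U \<Omega> m"
      unfolding kmeans_opt_def
    proof (rule cInf_lower)
      show "kmeans_obj U \<Omega> m \<in> {kmeans_obj U \<Omega> c |\<Omega> c. is_partition \<Omega>}" using part by blast
      show "bdd_below {kmeans_obj U \<Omega> c |\<Omega> c. is_partition \<Omega>}"
        by (rule bdd_belowI[of _ 0]) (use obj_nn in blast)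
    qed
    then show ?thesis using 1 by simp
  qed
  have objH_eq: "kmeans_obj U \<Omega>h ch = (\<Sum>i\<in>UNIV. (norm (U $ i - ch (labh i)))^2)"
  proof -
    have "kmeans_obj U \<Omega>h ch = (\<Sum>k\<in>UNIV. \<Sum>i\<in>\<Omega>h k. (norm (U $ i - ch (labh i)))^2)"
      unfolding kmeans_obj_def labh_def by (intro sum.cong refl) (simp add: lab_eq[OF partH])
    also have "\<dots> = (\<Sum>i\<in>UNIV. (norm (U $ i - ch (labh i)))^2)" by (rule part_sum[OF partH])
    finally show ?thesis .
  qed
  define e where "e i = norm (ch (labh i) - M $ i)" for i
  have e_nn: "e i \<ge> 0" for i unfolding e_def by simp
  have e_sum: "(\<Sum>i\<in>UNIV. (e i)^2) \<le> 2 * (2 + \<epsilon>) * cost"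
  proof -
    have pt: "(e i)^2 \<le> 2 * (norm (U $ i - ch (labh i)))^2 + 2 * (norm ((U - M) $ i))^2" for i
    proof -
      let ?a = "norm (U $ i - ch (labh i))" and ?b = "norm ((U - M) $ i)"
      have "ch (labh i) - M $ i = - (U $ i - ch (labh i)) + (U - M) $ i" by simp
      then have "e i \<le> ?a + ?b" unfolding e_def
        using norm_triangle_ineq[of "- (U $ i - ch (labh i))" "(U - M) $ i"] by (simp only: norm_minus_cancel)
      then have "(e i)^2 \<le> (?a + ?b)^2" using e_nn by (intro power_mono) auto
      also have "\<dots> \<le> 2 * ?a^2 + 2 * ?b^2" 
        using power2_sum[of ?a ?b] power2_diff[of ?a ?b] zero_le_power2[of "?a - ?b"] by linarith
      finally show ?thesis .
    qed
    have "(\<Sum>i\<in>UNIV. (e i)^2) \<le> (\<Sum>i\<in>UNIV. 2 * (norm (U $ i - ch (labh i)))^2 + 2 * (norm ((U - M) $ i))^2)"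
      by (rule sum_mono) (rule pt)
    also have "\<dots> = 2 * kmeans_obj U \<Omega>h ch + 2 * cost"
      unfolding objH_eq cost_def fr2_def by (simp add: sum.distrib sum_distrib_left)
    also have "\<dots> \<le> 2 * ((1 + \<epsilon>) * cost) + 2 * cost"
    proof -
      have "(1 + \<epsilon>) * kmeans_opt U \<le> (1 + \<epsilon>) * cost" using opt_le eps by (intro mult_left_mono) simp_all
      then show ?thesis using objH by simp
    qed
    also have "\<dots> = 2 * (2 + \<epsilon>) * cost" by (simp add: algebra_simps)
    finally show ?thesis .
  qed
  define b where "b k = \<Phi>bar $ (SOME i. i \<in> \<Omega> k)" for k
  have Prow: "\<Phi>bar $ i = b k" if "i \<in> \<Omega> k" for i k
  proof -
    have ne: "\<Omega> k \<noteq> {}" using part unfolding is_partition_def by blast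
    then have "(SOME i. i \<in> \<Omega> k) \<in> \<Omega> k" by (simp add: some_in_eq)
    then show ?thesis unfolding b_def using const that by blast
  qed
  define Bm :: "real^'r^'r" where "Bm = (\<chi> k. b k)"
  have "inj ((*v) Bm)"
  proof (rule injI)
    fix x y assume "Bm *v x = Bm *v y"
    then have 0: "Bm *v (x - y) = 0" by (simp add: matrix_vector_mult_diff_distrib)
    have "(\<Phi>bar *v (x - y)) $ i = 0" for i
    proof -
      have "(\<Phi>bar *v (x - y)) $ i = inner (b (lab \<Omega> i)) (x - y)"
        by (simp add: matrix_vector_mul_component Prow[OF lab_in[OF part]])
      also have "\<dots> = (Bm *v (x - y)) $ (lab \<Omega> i)"
        by (simp add: matrix_vector_mul_component Bm_def)
      finally show ?thesis using 0 by simp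
    qed
    then have "\<Phi>bar *v (x - y) = \<Phi>bar *v 0" by (simp add: vec_eq_iff)
    then have "x - y = 0" using injB unfolding inj_def by blast
    then show "x = y" by simp
  qed
  then obtain Bi where "Bi ** Bm = mat 1" using matrix_left_invertible_injective by blast
  then have BBi: "Bm ** Bi = mat 1" using matrix_left_right_inverse by blast
  define z :: "'r \<Rightarrow> real^'s" where "z k = (\<chi> i. if i \<in> \<Omega> k then 1 else 0)" for k
  define w where "w k = C *v (Bi *v axis k 1)" for k
  have zM: "z k = M *v w k" for k
  proof -
    have "(\<Phi>bar *v (Bi *v axis k 1)) $ i = z k $ i" for i
    proof -
      have "(\<Phi>bar *v (Bi *v axis k 1)) $ i = inner (b (lab \<Omega> i)) (Bi *v axis k 1)"
        by (simp add: matrix_vector_mul_component Prow[OF lab_in[OF part]])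
      also have "\<dots> = ((Bm ** Bi) *v axis k 1) $ (lab \<Omega> i)"
        by (simp add: matrix_vector_mul_component Bm_def matrix_vector_mul_assoc[symmetric])
      also have "\<dots> = (if lab \<Omega> i = k then 1 else 0)" by (simp add: BBi axis_def)
      also have "\<dots> = z k $ i" unfolding z_def using lab_in[OF part, of i] lab_eq[OF part, of i k] by auto
      finally show ?thesis .
    qed
    then have "z k = \<Phi>bar *v (Bi *v axis k 1)" by (simp add: vec_eq_iff)
    also have "\<dots> = M *v w k" unfolding w_def by (simp only: matrix_vector_mul_assoc matrix_mul_assoc MC)
    finally show ?thesis .
  qed
  have MTz: "transpose M *v z k = real (n k) *\<^sub>R m k" for k
  proof -
    have "(transpose M *v z k) $ j = real (n k) * m k $ j" for j
    proof -
      have "(transpose M *v z k) $ j = (\<Sum>i\<in>UNIV. M $ i $ j * z k $ i)"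
        by (simp add: vector_matrix_mult_def mult.commute)
      also have "\<dots> = (\<Sum>i\<in>UNIV. if i \<in> \<Omega> k then m k $ j else 0)"
        by (intro sum.cong refl) (simp add: z_def Mrow)
      also have "\<dots> = real (n k) * m k $ j" unfolding n_def by (rule sum_ind)
      finally show ?thesis .
    qed
    then show ?thesis by (simp add: vec_eq_iff)
  qed
  have npos: "real (n k) > 0" for k using n_pos[of k] by simp
  have sep: "1 / real (n k) + 1 / real (n l) \<le> (norm (m k - m l))^2" if kl: "k \<noteq> l" for k l
  proof -
    define v where "v = (1 / real (n k)) *\<^sub>R z k - (1 / real (n l)) *\<^sub>R z l"
    define ww where "ww = (1 / real (n k)) *\<^sub>R w k - (1 / real (n l)) *\<^sub>R w l"
    have vM: "v = M *v ww" unfolding v_def ww_def zM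
      by (simp add: matrix_vector_mult_diff_distrib matrix_vector_mult_scaleR)
    have MTv: "transpose M *v v = m k - m l" unfolding v_def
      using npos[of k] npos[of l]
      by (simp del: transpose_matrix_vector add: matrix_vector_mult_diff_distrib matrix_vector_mult_scaleR MTz)
    have Utv: "transpose U *v v = ww" unfolding vM by (simp add: matrix_vector_mul_assoc UtM)
    have nv: "(norm v)^2 = 1 / real (n k) + 1 / real (n l)"
    proof -
      have disj: "\<not> (i \<in> \<Omega> k \<and> i \<in> \<Omega> l)" for i
        using part kl unfolding is_partition_def by blast
      have "(v $ i)^2 = (if i \<in> \<Omega> k then 1 / (real (n k))^2 else 0) + (if i \<in> \<Omega> l then 1 / (real (n l))^2 else 0)" for i
        using disj[of i] unfolding v_def z_def by (auto simp: power_divide)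
      then have "(norm v)^2 = (\<Sum>i\<in>UNIV. (if i \<in> \<Omega> k then 1 / (real (n k))^2 else 0) + (if i \<in> \<Omega> l then 1 / (real (n l))^2 else 0))"
        unfolding norm_sq_vec by simp
      also have "\<dots> = real (n k) * (1 / (real (n k))^2) + real (n l) * (1 / (real (n l))^2)"
        unfolding sum.distrib n_def by (simp only: sum_ind)
      also have "\<dots> = 1 / real (n k) + 1 / real (n l)" using npos[of k] npos[of l] by (simp add: power2_eq_square)
      finally show ?thesis .
    qed
    have "(norm v)^2 = inner v (M *v ww)" using vM by (simp add: power2_norm_eq_inner)
    also have "\<dots> = inner (transpose M *v v) ww" by (metis inner_mv inner_commute)
    also have "\<dots> \<le> norm (m k - m l) * norm ww" unfolding MTv by (rule Cauchy_Schwarz_ineq2[THEN abs_le_D1])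
    also have "\<dots> \<le> norm (m k - m l) * norm v" unfolding Utv[symmetric] by (intro mult_left_mono proj1[OF UU]) simp
    finally have h: "(norm v)^2 \<le> norm (m k - m l) * norm v" .
    have "norm v > 0" using nv npos[of k] npos[of l]
      by (metis add_pos_pos divide_pos_pos norm_ge_zero order_less_le power_zero_numeral zero_less_one)
    then have "norm v \<le> norm (m k - m l)" using h by (simp add: power2_eq_square)
    then have "(norm v)^2 \<le> (norm (m k - m l))^2" by (intro power_mono) simp_all
    then show ?thesis using nv by simp
  qed
  define \<delta> where "\<delta> k = sqrt (1 / real (n k) + 1 / real N)" for k
  have dsq: "(\<delta> k)^2 = 1 / real (n k) + 1 / real N" for k
    unfolding \<delta>_def using npos[of k] Npos by simp
  have dpos: "\<delta> k > 0" for k unfolding \<delta>_def using npos[of k] Npos by (intro real_sqrt_gt_zero add_pos_pos) simp_all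
  have dle: "\<delta> k \<le> norm (m k - m l)" if "k \<noteq> l" for k l
  proof -
    have "1 / real N \<le> 1 / real (n l)" using n_le[of l] npos[of l] by (simp add: frac_le)
    then have "\<delta> k \<le> sqrt (1 / real (n k) + 1 / real (n l))" unfolding \<delta>_def by simp
    also have "\<dots> \<le> sqrt ((norm (m k - m l))^2)" using sep[OF that] by (simp only: real_sqrt_le_iff)
    finally show ?thesis by simp
  qed
  have dsep: "\<delta> k / 2 + \<delta> l / 2 \<le> norm (m k - m l)" if "k \<noteq> l" for k l
    using dle[OF that] dle[of l k] that by (simp add: norm_minus_commute)
  have close: "k = l" if "norm (c - m k) < \<delta> k / 2" "norm (c - m l) < \<delta> l / 2" for c k l
  proof (rule ccontr)
    assume kl: "k \<noteq> l"
    have "m k - m l = (c - m l) - (c - m k)" by simp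
    then have "norm (m k - m l) \<le> norm (c - m l) + norm (c - m k)" by (metis norm_triangle_ineq4)
    then show False using dsep[OF kl] that by simp
  qed
  define S where "S k = {i \<in> \<Omega> k. e i \<ge> \<delta> k / 2}" for k
  have eOm: "e i = norm (ch (labh i) - m k)" if "i \<in> \<Omega> k" for i k
    unfolding e_def using Mrow[OF that] by simp
  have Sk: "real (card (S k)) * (\<delta> k)^2 \<le> (\<Sum>i\<in>\<Omega> k. 4 * (e i)^2)" for k
  proof -
    have "real (card (S k)) * (\<delta> k)^2 = (\<Sum>i\<in>S k. (\<delta> k)^2)" by simp
    also have "\<dots> \<le> (\<Sum>i\<in>S k. 4 * (e i)^2)"
    proof (rule sum_mono)
      fix i assume "i \<in> S k"
      then have "\<delta> k / 2 \<le> e i" unfolding S_def by simp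
      then have "(\<delta> k / 2)^2 \<le> (e i)^2" using dpos[of k] by (intro power_mono) simp_all
      then show "(\<delta> k)^2 \<le> 4 * (e i)^2" by (simp add: power_divide)
    qed
    also have "\<dots> \<le> (\<Sum>i\<in>\<Omega> k. 4 * (e i)^2)"
      by (rule sum_mono2) (auto simp: S_def)
    finally show ?thesis .
  qed
  have Ssum: "(\<Sum>k\<in>UNIV. real (card (S k)) * (\<delta> k)^2) \<le> 8 * (2 + \<epsilon>) * cost"
  proof -
    have "(\<Sum>k\<in>UNIV. real (card (S k)) * (\<delta> k)^2) \<le> (\<Sum>k\<in>UNIV. \<Sum>i\<in>\<Omega> k. 4 * (e i)^2)"
      by (rule sum_mono) (rule Sk)
    also have "\<dots> = (\<Sum>i\<in>UNIV. 4 * (e i)^2)" by (rule part_sum[OF part])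
    also have "\<dots> = 4 * (\<Sum>i\<in>UNIV. (e i)^2)" by (simp add: sum_distrib_left)
    also have "\<dots> \<le> 4 * (2 * (2 + \<epsilon>) * cost)" using e_sum by simp
    also have "\<dots> = 8 * (2 + \<epsilon>) * cost" by simp
    finally show ?thesis .
  qed
  have Sk1: "real (card (S k)) * (\<delta> k)^2 \<le> 8 * (2 + \<epsilon>) * cost" for k
  proof -
    have "real (card (S k)) * (\<delta> k)^2 \<le> (\<Sum>k\<in>UNIV. real (card (S k)) * (\<delta> k)^2)"
      by (rule member_le_sum) simp_all
    then show ?thesis using Ssum by simp
  qed
  have cost2: "cost \<le> 64 / 49 * (\<Delta>^2 / \<sigma>^2)"
  proof -
    have "49 / 64 * \<sigma>^2 \<le> \<kappa>^2"
    proof -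
      have "(7/8 * \<sigma>)^2 \<le> \<kappa>^2" using kap sigpos by (intro power_mono) simp_all
      moreover have "(7/8 * \<sigma>)^2 = 49 / 64 * \<sigma>^2" by (simp add: power2_eq_square)
      ultimately show ?thesis by simp
    qed
    then have "\<Delta>^2 / \<kappa>^2 \<le> \<Delta>^2 / (49 / 64 * \<sigma>^2)"
      using sigpos kap(2) by (intro divide_left_mono) simp_all
    then show ?thesis using cost_bd by (simp add: field_simps)
  qed
  have R: "(2 + \<epsilon>) * (\<Delta>^2 / \<sigma>^2) \<le> (real nm + real N) / (64 * real N)"
  proof -
    have "(2 + \<epsilon>) * \<Delta>^2 \<le> (2 + \<epsilon>) * (\<sigma>^2 * (real nm + real N) / (64 * ((2 + \<epsilon>) * real N)))"
      using hyp2 eps by (intro mult_left_mono) simp_all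
    also have "\<dots> = \<sigma>^2 * ((real nm + real N) / (64 * real N))"
    proof -
      have x: "2 + \<epsilon> \<noteq> 0" using eps by auto
      have gen: "x * (a / (c * (x * d))) = a / (c * d)" if "x \<noteq> 0" for x a c d :: real
        using that by (cases "c * d = 0") (auto simp: field_simps)
      show ?thesis using gen[OF x, of "\<sigma>^2 * (real nm + real N)" 64 "real N"] by simp

    qed
    finally show ?thesis using sigpos by (simp add: field_simps)
  qed
  have bigbd: "8 * (2 + \<epsilon>) * cost \<le> 512 / 49 * ((2 + \<epsilon>) * (\<Delta>^2 / \<sigma>^2))"
  proof -
    have "8 * (2 + \<epsilon>) * cost \<le> 8 * (2 + \<epsilon>) * (64 / 49 * (\<Delta>^2 / \<sigma>^2))"
      using cost2 eps by (intro mult_left_mono) simp_all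
    then show ?thesis by (simp add: algebra_simps)
  qed
  have cardS: "card (S k) < n k" for k
  proof -
    have "real (card (S k)) * (\<delta> k)^2 \<le> 8 * (2 + \<epsilon>) * cost" by (rule Sk1)
    also have "\<dots> \<le> 512 / 49 * ((2 + \<epsilon>) * (\<Delta>^2 / \<sigma>^2))" by (rule bigbd)
    also have "\<dots> \<le> 512 / 49 * ((real nm + real N) / (64 * real N))"
      using R by (intro mult_left_mono) simp_all
    also have "\<dots> = 8 / 49 * ((real nm + real N) / real N)"
    proof -
      have "real N \<noteq> 0" using Npos by simp
      then show ?thesis by (simp add: field_simps)
    qed
    also have "\<dots> \<le> 8 / 49 * ((real (n k) + real N) / real N)"
      using n_ge[of k] Npos by (intro mult_left_mono divide_right_mono) simp_all
    also have "\<dots> = 8 / 49 * real (n k) * (\<delta> k)^2"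
      unfolding dsq using npos[of k] Npos by (simp add: field_simps)
    finally have "real (card (S k)) \<le> 8 / 49 * real (n k)" using dpos[of k] by simp
    then show ?thesis using npos[of k] by simp
  qed
  have ex_rep: "\<exists>i. i \<in> \<Omega> k \<and> i \<notin> S k" for k
  proof (rule ccontr)
    assume "\<not> ?thesis"
    then have "\<Omega> k \<subseteq> S k" by blast
    then have "n k \<le> card (S k)" unfolding n_def by (intro card_mono) simp_all
    then show False using cardS[of k] by simp
  qed
  define rep where "rep k = (SOME i. i \<in> \<Omega> k \<and> i \<notin> S k)" for k
  have rep: "rep k \<in> \<Omega> k" "rep k \<notin> S k" for k
    using someI_ex[OF ex_rep[of k]] unfolding rep_def by blast+
  have goodclose: "norm (ch (labh i) - m k) < \<delta> k / 2" if "i \<in> \<Omega> k" "i \<notin> S k" for i k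
    using that eOm[OF that(1)] unfolding S_def by simp
  define h where "h k = labh (rep k)" for k
  have hclose: "norm (ch (h k) - m k) < \<delta> k / 2" for k
    unfolding h_def using goodclose[OF rep] .
  have "inj h"
  proof (rule injI)
    fix k l assume "h k = h l"
    then show "k = l" using close[OF hclose[of k]] hclose[of l] by simp
  qed
  then have bijh: "bij h" using finite_UNIV_inj_surj[of h] by (simp add: bij_def)
  have good: "i \<in> \<Omega>h (h k)" if "i \<in> \<Omega> k" "i \<notin> S k" for i k
  proof -
    obtain l where l: "labh i = h l" using surj_f_inv_f[of h "labh i"] bijh bij_is_surj by metis
    have "k = l" using close[OF goodclose[OF that, unfolded l] hclose[of l]] .
    then have "labh i = h k" using l by simp
    then show ?thesis using lab_in[OF partH, of i] unfolding labh_def by simp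
  qed
  have mis: "card {i. i \<in> \<Omega> k \<and> i \<notin> \<Omega>h (h k)} \<le> card (S k)" for k
    by (rule card_mono) (use good in \<open>auto simp: S_def\<close>)
  define val where "val g = (\<Sum>k\<in>UNIV. real (card {i. i \<in> \<Omega> k \<and> i \<notin> \<Omega>h (g k)}) / real (card (\<Omega> k)))" for g
  have "misclustering_rate \<Omega> \<Omega>h \<le> val h"
  proof -
    have eq: "{val g | g. bij g} = val ` {g. bij g}" by blast
    have "misclustering_rate \<Omega> \<Omega>h = Min {val g | g. bij g}"
      unfolding misclustering_rate_def val_def ..
    also have "\<dots> \<le> val h" unfolding eq by (rule Min_le) (use bijh in auto)
    finally show ?thesis .
  qed
  also have "val h \<le> (\<Sum>k\<in>UNIV. real (card (S k)) * (\<delta> k)^2)"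
    unfolding val_def
  proof (rule sum_mono)
    fix k
    have "real (card {i. i \<in> \<Omega> k \<and> i \<notin> \<Omega>h (h k)}) / real (card (\<Omega> k)) \<le> real (card (S k)) / real (n k)"
      unfolding n_def[symmetric] using mis[of k] npos[of k] by (simp add: divide_right_mono)
    also have "\<dots> = real (card (S k)) * (1 / real (n k))" by simp
    also have "\<dots> \<le> real (card (S k)) * (\<delta> k)^2" unfolding dsq using Npos by (intro mult_left_mono) simp_all
    finally show "real (card {i. i \<in> \<Omega> k \<and> i \<notin> \<Omega>h (h k)}) / real (card (\<Omega> k)) \<le> real (card (S k)) * (\<delta> k)^2" .
  qed
  also have "\<dots> \<le> 8 * (2 + \<epsilon>) * cost" by (rule Ssum)
  also have "\<dots> \<le> 512 / 49 * ((2 + \<epsilon>) * (\<Delta>^2 / \<sigma>^2))" by (rule bigbd)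
  also have "\<dots> \<le> 64 * ((2 + \<epsilon>) * (\<Delta>^2 / \<sigma>^2))"
    using eps by (intro mult_right_mono) simp_all
  also have "\<dots> = 64 * (2 + \<epsilon>) / (sigma_r \<Phi>bar)^2 * (frob_norm (\<Phi>bar - \<Phi>))^2"
    unfolding \<sigma>_def \<Delta>_def E_def by simp
  finally show ?thesis .
qed
end
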